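(* Let $\rho>0$ and $\varepsilon\in(0,1]$. There exists a constant $c_6=c_6(\rho)>0$ such that if $v\in H^1(-\rho,\rho)$ and $$\int_{-\rho}^\rho|y^n|\,|v-\operatorname{sign}(y^n)|^2\,dy^n\le c_6,$$ then $$\int_{-\rho}^\rho e_{\varepsilon,\nu}(v)\,dy^n\ge c_0-Ce^{-c/\varepsilon},\qquad e_{\varepsilon,\nu}(v):=\frac\varepsilon2|\partial_{y^n}v|^2+\frac1\varepsilon F(v).$$ Moreover, there exists $c_7=c_7(\rho)>0$ such that if in addition $\int_{-\rho}^\rho e_{\varepsilon,\nu}(v)\,dy^n-c_0\le c_7$, then for every $\bar\rho\ge\rho$ such that $v$ is defined (and $H^1$) on $(-\bar\rho,\bar\rho)$, $$\int_{-\bar\rho}^{\bar\rho}\frac12\Big(\sqrt\varepsilon\,\partial_{y^n}v-\frac{f_1(v)}{\sqrt\varepsilon}\Big)^2dy^n\le C\Big(\int_{-\bar\rho}^{\bar\rho}e_{\varepsilon,\nu}(v)\,dy^n-c_0\Big)+Ce^{-c/\varepsilon}.$$ Here $C,c>0$ depend on $\rho$ and $F$ but not on $v$, $\varepsilon$ or $\bar\rho$.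
   Context: $F:\mathbb{R}\to\mathbb{R}$ is smooth with $F(x)>0$ for $|x|\ne1$ and $c(1-|x|)^2\le F(x)\le C(1-|x|)^2$ for $|x|\le2$; $f_1=\sqrt{2F}$ on $[-1,1]$ and $f_1=-\sqrt{2F}$ elsewhere; $c_0:=\int_{-1}^1f_1(s)\,ds$. $\operatorname{sign}(s)=\pm1$ for $\pm s>0$. *)

theory Defs
  imports "HOL-Analysis.Analysis"
begin

definition smooth_fun :: "(real \<Rightarrow> real) \<Rightarrow> bool" where
  "smooth_fun F \<longleftrightarrow> (\<forall>k. \<forall>x. ((deriv ^^ k) F) differentiable (at x))"

definition f1 :: "(real \<Rightarrow> real) \<Rightarrow> real \<Rightarrow> real" where
  "f1 F s = (if \<bar>s\<bar> \<le> 1 then sqrt (2 * F s) else - sqrt (2 * F s))"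

definition c0 :: "(real \<Rightarrow> real) \<Rightarrow> real" where
  "c0 F = (LBINT s=-1..1. f1 F s)"

text \<open>v belongs to H^1(a,b) with weak derivative v': v' is in L^1 and L^2 on [a,b]
  and v is the (absolutely continuous) primitive of v' there.\<close>
definition H1_on :: "real \<Rightarrow> real \<Rightarrow> (real \<Rightarrow> real) \<Rightarrow> (real \<Rightarrow> real) \<Rightarrow> bool" where
  "H1_on a b v v' \<longleftrightarrow>
     set_integrable lborel {a..b} v' \<and>
     set_integrable lborel {a..b} (\<lambda>x. (v' x)\<^sup>2) \<and>
     (\<forall>x\<in>{a..b}. v x = v a + (LBINT t=a..x. v' t))"

definition energy_density :: "(real \<Rightarrow> real) \<Rightarrow> real \<Rightarrow> (real \<Rightarrow> real) \<Rightarrow> (real \<Rightarrow> real) \<Rightarrow> real \<Rightarrow> real" where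
  "energy_density F \<epsilon> v v' y = \<epsilon> / 2 * (v' y)\<^sup>2 + F (v y) / \<epsilon>"

end

theory Submission
  imports Defs
begin


locale Fsetup =
  fixes F :: "real \<Rightarrow> real" and cF CF :: real
  assumes Fcont: "continuous_on UNIV F"
    and Fpos: "\<And>x. \<bar>x\<bar> \<noteq> 1 \<Longrightarrow> F x > 0"
    and cF: "cF > 0" and CF: "CF > 0"
    and quad: "\<And>x. \<bar>x\<bar> \<le> 2 \<Longrightarrow> cF * (1 - \<bar>x\<bar>)\<^sup>2 \<le> F x \<and> F x \<le> CF * (1 - \<bar>x\<bar>)\<^sup>2"
begin

lemma F_nonneg: "F x \<ge> 0"
proof (cases "\<bar>x\<bar> = 1")
  case True
  then have "cF * (1 - \<bar>x\<bar>)\<^sup>2 \<le> F x" using quad[of x] by auto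
  then show ?thesis using True by simp
next
  case False then show ?thesis using Fpos[of x] by simp
qed

lemma F_one: "\<bar>x\<bar> = 1 \<Longrightarrow> F x = 0"
  using quad[of x] F_nonneg[of x] by auto

lemma f1_sq: "(f1 F s)\<^sup>2 = 2 * F s"
  using F_nonneg[of s] by (simp add: f1_def)

lemma f1_abs: "\<bar>f1 F s\<bar> = sqrt (2 * F s)"
  using F_nonneg[of s] by (simp add: f1_def)

lemma f1_cont: "continuous_on UNIV (f1 F)"
proof -
  have c: "continuous_on S (\<lambda>x. sqrt (2 * F x))" for S
    by (intro continuous_intros continuous_on_subset[OF Fcont]) auto
  have "continuous_on ({x. \<bar>x\<bar> \<le> 1} \<union> {x. 1 \<le> \<bar>x\<bar>})
     (\<lambda>x. if \<bar>x\<bar> \<le> 1 then sqrt (2 * F x) else - sqrt (2 * F x))"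
  proof (rule continuous_on_cases)
    show "closed {x::real. \<bar>x\<bar> \<le> 1}" by (intro closed_Collect_le continuous_intros)
    show "closed {x::real. 1 \<le> \<bar>x\<bar>}" by (intro closed_Collect_le continuous_intros)
    show "continuous_on {x. \<bar>x\<bar> \<le> 1} (\<lambda>x. sqrt (2 * F x))" by (rule c)
    show "continuous_on {x. 1 \<le> \<bar>x\<bar>} (\<lambda>x. - sqrt (2 * F x))" by (intro continuous_intros c)
    show "\<forall>x. x \<in> {x. \<bar>x\<bar> \<le> 1} \<and> \<not> \<bar>x\<bar> \<le> 1 \<or> x \<in> {x. 1 \<le> \<bar>x\<bar>} \<and> \<bar>x\<bar> \<le> 1 \<longrightarrow>
      sqrt (2 * F x) = - sqrt (2 * F x)"
      using F_one by auto
  qed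
  moreover have "{x. \<bar>x\<bar> \<le> 1} \<union> {x. 1 \<le> \<bar>x\<bar>} = (UNIV::real set)" by auto
  ultimately show ?thesis unfolding f1_def[abs_def] by simp
qed

definition G :: "real \<Rightarrow> real" where "G s = (LBINT x=0..s. f1 F x)"

lemma G_deriv: "(G has_real_derivative f1 F s) (at s)"
proof -
  let ?a = "- \<bar>s\<bar> - 1" and ?b = "\<bar>s\<bar> + 1"
  have "((\<lambda>u. LBINT y=0..u. f1 F y) has_vector_derivative (f1 F s)) (at s within {?a..?b})"
    using interval_integral_FTC2[of ?a 0 ?b "f1 F" s] continuous_on_subset[OF f1_cont] by (auto simp: zero_ereal_def)
  then have "(G has_vector_derivative (f1 F s)) (at s within {?a..?b})"
    unfolding G_def[abs_def] .
  moreover have "s \<in> interior {?a..?b}" by auto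
  ultimately have "(G has_vector_derivative (f1 F s)) (at s)"
    using at_within_interior by metis
  then show ?thesis by (simp add: has_real_derivative_iff_has_vector_derivative)
qed

lemma G_cont: "continuous_on S G"
  using G_deriv by (meson DERIV_isCont continuous_at_imp_continuous_on)

lemma c0_G: "c0 F = G 1 - G (-1)"
proof -
  have "(LBINT x=ereal (-1)..ereal 1. f1 F x) = G 1 - G (-1)"
  proof (rule interval_integral_FTC_finite)
    show "continuous_on {min (- 1) 1..max (- 1) 1} (f1 F)" using continuous_on_subset[OF f1_cont] by auto
    fix x show "(G has_vector_derivative f1 F x) (at x within {min (- 1) 1..max (- 1) 1})"
      using has_field_derivative_at_within[OF G_deriv]
      by (simp add: has_real_derivative_iff_has_vector_derivative)
  qed
  then show ?thesis unfolding c0_def by (simp add: one_ereal_def)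
qed

definition kL where "kL = sqrt (2 * cF) / 2"
definition kU where "kU = sqrt (2 * CF) / 2"

lemma cF_le_CF: "cF \<le> CF"
  using quad[of 0] by simp

lemma kL_pos: "kL > 0" using cF by (simp add: kL_def)
lemma kU_pos: "kU > 0" using CF by (simp add: kU_def)
lemma kL_le_kU: "kL \<le> kU" using cF_le_CF by (simp add: kL_def kU_def)

lemma f1_bounds_pos:
  assumes "0 \<le> s" "s \<le> 2"
  shows "2 * kL * \<bar>1 - s\<bar> \<le> \<bar>f1 F s\<bar> \<and> \<bar>f1 F s\<bar> \<le> 2 * kU * \<bar>1 - s\<bar>"
proof -
  have q: "cF * (1 - s)\<^sup>2 \<le> F s" "F s \<le> CF * (1 - s)\<^sup>2" using quad[of s] assms by auto
  have "sqrt (2 * (cF * (1 - s)\<^sup>2)) \<le> sqrt (2 * F s)" using q by simp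
  moreover have "sqrt (2 * (cF * (1 - s)\<^sup>2)) = 2 * kL * \<bar>1 - s\<bar>"
    by (simp add: kL_def real_sqrt_mult)
  moreover have "sqrt (2 * F s) \<le> sqrt (2 * (CF * (1 - s)\<^sup>2))" using q by simp
  moreover have "sqrt (2 * (CF * (1 - s)\<^sup>2)) = 2 * kU * \<bar>1 - s\<bar>"
    by (simp add: kU_def real_sqrt_mult)
  ultimately show ?thesis by (simp add: f1_abs)
qed

lemma f1_bounds_neg:
  assumes "-2 \<le> s" "s \<le> 0"
  shows "2 * kL * \<bar>1 + s\<bar> \<le> \<bar>f1 F s\<bar> \<and> \<bar>f1 F s\<bar> \<le> 2 * kU * \<bar>1 + s\<bar>"
proof -
  have e: "1 - \<bar>s\<bar> = 1 + s" using assms by simp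
  have q: "cF * (1 + s)\<^sup>2 \<le> F s" "F s \<le> CF * (1 + s)\<^sup>2" using quad[of s] assms e by auto
  have "sqrt (2 * (cF * (1 + s)\<^sup>2)) \<le> sqrt (2 * F s)" using q by simp
  moreover have "sqrt (2 * (cF * (1 + s)\<^sup>2)) = 2 * kL * \<bar>1 + s\<bar>"
    by (simp add: kL_def real_sqrt_mult)
  moreover have "sqrt (2 * F s) \<le> sqrt (2 * (CF * (1 + s)\<^sup>2))" using q by simp
  moreover have "sqrt (2 * (CF * (1 + s)\<^sup>2)) = 2 * kU * \<bar>1 + s\<bar>"
    by (simp add: kU_def real_sqrt_mult)
  ultimately show ?thesis by (simp add: f1_abs)
qed

lemma f1_sign_pos: "\<bar>s\<bar> \<le> 1 \<Longrightarrow> f1 F s \<ge> 0" using F_nonneg[of s] by (simp add: f1_def)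
lemma f1_sign_neg: "\<bar>s\<bar> > 1 \<Longrightarrow> f1 F s \<le> 0" using F_nonneg[of s] by (simp add: f1_def)

lemma f1_one: "f1 F 1 = 0" "f1 F (-1) = 0"
  using F_one[of 1] F_one[of "-1"] by (auto simp: f1_def)

lemma H_bounds_pos:
  assumes "0 \<le> s" "s \<le> 2"
  shows "kL * (1 - s)\<^sup>2 \<le> G 1 - G s \<and> G 1 - G s \<le> kU * (1 - s)\<^sup>2"
proof -
  define D where "D x = G 1 - G x - kL * (1 - x)\<^sup>2" for x
  define U where "U x = kU * (1 - x)\<^sup>2 - (G 1 - G x)" for x
  have dD: "(D has_real_derivative (- f1 F x + 2 * kL * (1 - x))) (at x)" for x
    unfolding D_def[abs_def] by (auto intro!: derivative_eq_intros G_deriv simp: power2_eq_square algebra_simps)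
  have dU: "(U has_real_derivative (- 2 * kU * (1 - x) + f1 F x)) (at x)" for x
    unfolding U_def[abs_def] by (auto intro!: derivative_eq_intros G_deriv simp: power2_eq_square algebra_simps)
  have D1: "D 1 = 0" "U 1 = 0" by (auto simp: D_def U_def)
  have "D s \<ge> 0 \<and> U s \<ge> 0"
  proof (cases "s \<le> 1")
    case True
    have "D s \<ge> D 1"
    proof (rule DERIV_nonpos_imp_nonincreasing[OF True])
      fix x assume x: "s \<le> x" "x \<le> 1"
      then have "2 * kL * \<bar>1 - x\<bar> \<le> \<bar>f1 F x\<bar>" "f1 F x \<ge> 0"
        using f1_bounds_pos[of x] f1_sign_pos[of x] assms by auto
      then show "\<exists>y. (D has_real_derivative y) (at x) \<and> y \<le> 0"
        using dD x by (intro exI[of _ "- f1 F x + 2 * kL * (1 - x)"]) (auto simp: algebra_simps)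
    qed
    moreover have "U s \<ge> U 1"
    proof (rule DERIV_nonpos_imp_nonincreasing[OF True])
      fix x assume x: "s \<le> x" "x \<le> 1"
      then have "\<bar>f1 F x\<bar> \<le> 2 * kU * \<bar>1 - x\<bar>" "f1 F x \<ge> 0"
        using f1_bounds_pos[of x] f1_sign_pos[of x] assms by auto
      then show "\<exists>y. (U has_real_derivative y) (at x) \<and> y \<le> 0"
        using dU x by (intro exI[of _ "- 2 * kU * (1 - x) + f1 F x"]) (auto simp: algebra_simps)
    qed
    ultimately show ?thesis using D1 by simp
  next
    case False
    then have s1: "1 \<le> s" by simp
    have sg: "f1 F x \<le> 0" if "1 \<le> x" for x
      using f1_sign_neg[of x] f1_one that by (cases "x = 1") auto
    have "D 1 \<le> D s"
    proof (rule DERIV_nonneg_imp_nondecreasing[OF s1])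
      fix x assume x: "1 \<le> x" "x \<le> s"
      then have "2 * kL * \<bar>1 - x\<bar> \<le> \<bar>f1 F x\<bar>" "f1 F x \<le> 0"
        using f1_bounds_pos[of x] sg[of x] assms by auto
      then show "\<exists>y. (D has_real_derivative y) (at x) \<and> y \<ge> 0"
        using dD x by (intro exI[of _ "- f1 F x + 2 * kL * (1 - x)"]) (auto simp: algebra_simps)
    qed
    moreover have "U 1 \<le> U s"
    proof (rule DERIV_nonneg_imp_nondecreasing[OF s1])
      fix x assume x: "1 \<le> x" "x \<le> s"
      then have "\<bar>f1 F x\<bar> \<le> 2 * kU * \<bar>1 - x\<bar>" "f1 F x \<le> 0"
        using f1_bounds_pos[of x] sg[of x] assms by auto
      then show "\<exists>y. (U has_real_derivative y) (at x) \<and> y \<ge> 0"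
        using dU x by (intro exI[of _ "- 2 * kU * (1 - x) + f1 F x"]) (auto simp: algebra_simps)
    qed
    ultimately show ?thesis using D1 by simp
  qed
  then show ?thesis by (simp add: D_def U_def)
qed

lemma H_bounds_neg:
  assumes "-2 \<le> s" "s \<le> 0"
  shows "kL * (1 + s)\<^sup>2 \<le> G s - G (-1) \<and> G s - G (-1) \<le> kU * (1 + s)\<^sup>2"
proof -
  define D where "D x = G x - G (-1) - kL * (1 + x)\<^sup>2" for x
  define U where "U x = kU * (1 + x)\<^sup>2 - (G x - G (-1))" for x
  have dD: "(D has_real_derivative (f1 F x - 2 * kL * (1 + x))) (at x)" for x
    unfolding D_def[abs_def] by (auto intro!: derivative_eq_intros G_deriv simp: power2_eq_square algebra_simps)
  have dU: "(U has_real_derivative (2 * kU * (1 + x) - f1 F x)) (at x)" for x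
    unfolding U_def[abs_def] by (auto intro!: derivative_eq_intros G_deriv simp: power2_eq_square algebra_simps)
  have D1: "D (-1) = 0" "U (-1) = 0" by (auto simp: D_def U_def)
  have "D s \<ge> 0 \<and> U s \<ge> 0"
  proof (cases "-1 \<le> s")
    case True
    have "D (-1) \<le> D s"
    proof (rule DERIV_nonneg_imp_nondecreasing[OF True])
      fix x assume x: "-1 \<le> x" "x \<le> s"
      then have "2 * kL * \<bar>1 + x\<bar> \<le> \<bar>f1 F x\<bar>" "f1 F x \<ge> 0"
        using f1_bounds_neg[of x] f1_sign_pos[of x] assms by auto
      then show "\<exists>y. (D has_real_derivative y) (at x) \<and> y \<ge> 0"
        using dD x by (intro exI[of _ "f1 F x - 2 * kL * (1 + x)"]) (auto simp: algebra_simps)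
    qed
    moreover have "U (-1) \<le> U s"
    proof (rule DERIV_nonneg_imp_nondecreasing[OF True])
      fix x assume x: "-1 \<le> x" "x \<le> s"
      then have "\<bar>f1 F x\<bar> \<le> 2 * kU * \<bar>1 + x\<bar>" "f1 F x \<ge> 0"
        using f1_bounds_neg[of x] f1_sign_pos[of x] assms by auto
      then show "\<exists>y. (U has_real_derivative y) (at x) \<and> y \<ge> 0"
        using dU x by (intro exI[of _ "2 * kU * (1 + x) - f1 F x"]) (auto simp: algebra_simps)
    qed
    ultimately show ?thesis using D1 by simp
  next
    case False
    then have s1: "s \<le> -1" by simp
    have sg: "f1 F x \<le> 0" if "x \<le> -1" for x
      using f1_sign_neg[of x] f1_one that by (cases "x = -1") auto
    have "D s \<ge> D (-1)"
    proof (rule DERIV_nonpos_imp_nonincreasing[OF s1])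
      fix x assume x: "s \<le> x" "x \<le> -1"
      then have "2 * kL * \<bar>1 + x\<bar> \<le> \<bar>f1 F x\<bar>" "f1 F x \<le> 0"
        using f1_bounds_neg[of x] sg[of x] assms by auto
      then show "\<exists>y. (D has_real_derivative y) (at x) \<and> y \<le> 0"
        using dD x by (intro exI[of _ "f1 F x - 2 * kL * (1 + x)"]) (auto simp: algebra_simps)
    qed
    moreover have "U s \<ge> U (-1)"
    proof (rule DERIV_nonpos_imp_nonincreasing[OF s1])
      fix x assume x: "s \<le> x" "x \<le> -1"
      then have "\<bar>f1 F x\<bar> \<le> 2 * kU * \<bar>1 + x\<bar>" "f1 F x \<le> 0"
        using f1_bounds_neg[of x] sg[of x] assms by auto
      then show "\<exists>y. (U has_real_derivative y) (at x) \<and> y \<le> 0"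
        using dU x by (intro exI[of _ "2 * kU * (1 + x) - f1 F x"]) (auto simp: algebra_simps)
    qed
    ultimately show ?thesis using D1 by simp
  qed
  then show ?thesis by (simp add: D_def U_def)
qed

definition kap where "kap = kU / cF"
lemma kap_pos: "kap > 0" using kU_pos cF by (simp add: kap_def)

lemma H_le_F_pos: "0 \<le> s \<Longrightarrow> s \<le> 2 \<Longrightarrow> G 1 - G s \<le> kap * F s"
proof -
  assume a: "0 \<le> s" "s \<le> 2"
  have "cF * (1 - s)\<^sup>2 \<le> F s" using quad[of s] a by auto
  then have "kU * (1 - s)\<^sup>2 \<le> kap * F s"
    using cF kU_pos by (simp add: kap_def field_simps)
  then show ?thesis using H_bounds_pos[OF a] by linarith
qed

lemma H_le_F_neg: "-2 \<le> s \<Longrightarrow> s \<le> 0 \<Longrightarrow> G s - G (-1) \<le> kap * F s"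
proof -
  assume a: "-2 \<le> s" "s \<le> 0"
  have "1 - \<bar>s\<bar> = 1 + s" using a by simp
  then have "cF * (1 + s)\<^sup>2 \<le> F s" using quad[of s] a by auto
  then have "kU * (1 + s)\<^sup>2 \<le> kap * F s"
    using cF kU_pos by (simp add: kap_def field_simps)
  then show ?thesis using H_bounds_neg[OF a] by linarith
qed

end


lemma seq_lemma:
  fixes Hs Ep :: "nat \<Rightarrow> real"
  assumes "\<And>j. Ep j \<ge> Hs j - Hs (Suc j)" "\<And>j. Ep j \<ge> Hs (Suc j) / 2"
  shows "(\<Sum>j<m. Ep j) \<ge> (1 - 5/4 * (2/3)^m) * Hs 0 + 1/4 * Hs m"
  using assms
proof (induction m arbitrary: Hs Ep)
  case 0
  then show ?case by simp
next
  case (Suc m)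
  have IH: "(\<Sum>j<m. Ep (Suc j)) \<ge> (1 - 5/4 * (2/3)^m) * Hs 1 + 1/4 * Hs (Suc m)"
    using Suc.IH[of "\<lambda>j. Hs (Suc j)" "\<lambda>j. Ep (Suc j)"] Suc.prems by auto
  have sum: "(\<Sum>j<Suc m. Ep j) = Ep 0 + (\<Sum>j<m. Ep (Suc j))"
    by (rule sum.lessThan_Suc_shift)
  define T where "T = 5/4 * (2/3::real)^m"
  have T0: "T \<ge> 0" by (simp add: T_def)
  have T1: "T \<le> 5/4" unfolding T_def by (simp add: power_le_one)
  have TS: "5/4 * (2/3::real)^Suc m = T * (2/3)" by (simp add: T_def)
  have key: "Ep 0 + (1 - T) * Hs 1 \<ge> (1 - T * (2/3)) * Hs 0"
  proof (cases "Hs 1 \<le> 2/3 * Hs 0")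
    case True
    have "Ep 0 \<ge> Hs 0 - Hs 1" using Suc.prems(1)[of 0] by simp
    moreover have "T * Hs 1 \<le> T * (2/3 * Hs 0)" using True T0 by (rule mult_left_mono)
    ultimately show ?thesis by (simp add: algebra_simps)
  next
    case False
    have "Ep 0 \<ge> Hs 1 / 2" using Suc.prems(2)[of 0] by simp
    moreover have "(3/2 - T) * (2/3 * Hs 0) \<le> (3/2 - T) * Hs 1"
      using False T1 by (intro mult_left_mono) auto
    moreover have "(3/2 - T) * (2/3 * Hs 0) = Hs 0 - 2/3 * (T * Hs 0)" by (simp add: field_simps)
    moreover have "(3/2 - T) * Hs 1 = 3/2 * Hs 1 - T * Hs 1" by (simp add: field_simps)
    moreover have "(1 - T) * Hs 1 = Hs 1 - T * Hs 1" by (simp add: field_simps)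
    moreover have "(1 - T * (2/3)) * Hs 0 = Hs 0 - 2/3 * (T * Hs 0)" by (simp add: field_simps)
    ultimately show ?thesis by argo
  qed
  show ?case using IH key unfolding sum TS T_def[symmetric] by (simp add: algebra_simps)
qed


lemma chain_rule_HK:
  fixes u w g G :: "real \<Rightarrow> real" and a b :: real
  assumes ab: "a \<le> b"
    and wi: "w integrable_on {a..b}" and awi: "(\<lambda>t. \<bar>w t\<bar>) integrable_on {a..b}"
    and pi: "(\<lambda>t. g (u t) * w t) integrable_on {a..b}"
    and ur: "\<And>t. t \<in> {a..b} \<Longrightarrow> u t = u a + integral {a..t} w"
    and gc: "continuous_on UNIV g"
    and Gd: "\<And>s. (G has_real_derivative g s) (at s)"
  shows "G (u b) - G (u a) = integral {a..b} (\<lambda>t. g (u t) * w t)"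
proof -
  have "continuous_on {a..b} (\<lambda>t. u a + integral {a..t} w)"
    by (intro continuous_intros indefinite_integral_continuous_1[OF wi])
  then have uc: "continuous_on {a..b} u"
  proof (rule continuous_on_eq)
    fix x assume "x \<in> {a..b}"
    from ur[OF this] show "u a + integral {a..x} w = u x" by simp
  qed
  have udiff: "u q - u p = integral {p..q} w" if "a \<le> p" "p \<le> q" "q \<le> b" for p q
  proof -
    have i: "w integrable_on {a..q}" by (rule integrable_on_subinterval[OF wi]) (use that in auto)
    have "integral {a..p} w + integral {p..q} w = integral {a..q} w"
      by (rule Henstock_Kurzweil_Integration.integral_combine) (use that i in auto)
    moreover have "u p = u a + integral {a..p} w" using that by (intro ur) auto
    moreover have "u q = u a + integral {a..q} w" using that by (intro ur) auto
    ultimately show ?thesis by linarith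
  qed
  let ?h = "\<lambda>t. g (u t) * w t"
  have pcomb: "integral {a..p} ?h + integral {p..q} ?h = integral {a..q} ?h"
    if "a \<le> p" "p \<le> q" "q \<le> b" for p q
  proof -
    have i: "?h integrable_on {a..q}" by (rule integrable_on_subinterval[OF pi]) (use that in auto)
    show ?thesis by (rule Henstock_Kurzweil_Integration.integral_combine) (use that i in auto)
  qed
  have acomb: "integral {a..p} (\<lambda>t. \<bar>w t\<bar>) + integral {p..q} (\<lambda>t. \<bar>w t\<bar>) = integral {a..q} (\<lambda>t. \<bar>w t\<bar>)"
    if "a \<le> p" "p \<le> q" "q \<le> b" for p q
  proof -
    have i: "(\<lambda>t. \<bar>w t\<bar>) integrable_on {a..q}" by (rule integrable_on_subinterval[OF awi]) (use that in auto)
    show ?thesis by (rule Henstock_Kurzweil_Integration.integral_combine) (use that i in auto)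
  qed
  have gu: "continuous_on {a..b} (\<lambda>t. g (u t))"
    using continuous_on_compose2[OF gc uc] by auto
  then have ucont: "uniformly_continuous_on {a..b} (\<lambda>t. g (u t))"
    by (intro compact_uniformly_continuous) auto
  define \<Phi> where "\<Phi> t = G (u t) - G (u a) - integral {a..t} ?h" for t
  define I where "I = integral {a..b} (\<lambda>t. \<bar>w t\<bar>)"
  have mvt: "\<exists>s\<in>{p..q}. G (u q) - G (u p) = g (u s) * (u q - u p)"
    if pq0: "a \<le> p" "p \<le> q" "q \<le> b" for p q
  proof -
    have ucpq: "continuous_on {p..q} u" by (rule continuous_on_subset[OF uc]) (use pq0 in auto)
    consider "u p = u q" | "u p < u q" | "u q < u p" by linarith
    then show ?thesis
    proof cases
      case 1 then show ?thesis using pq0 by (intro bexI[of _ p]) auto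
    next
      case 2
      obtain z where z: "u p < z" "z < u q" "G (u q) - G (u p) = (u q - u p) * g z"
        using MVT2[OF 2, of G g] Gd by blast
      obtain s where s: "p \<le> s" "s \<le> q" "u s = z"
        using IVT'[of u p z q] z ucpq pq0 by auto
      show ?thesis using s z by (intro bexI[of _ s]) auto
    next
      case 3
      obtain z where z: "u q < z" "z < u p" "G (u p) - G (u q) = (u p - u q) * g z"
        using MVT2[OF 3, of G g] Gd by blast
      obtain s where s: "p \<le> s" "s \<le> q" "u s = z"
        using IVT2'[of u q z p] z ucpq pq0 by auto
      show ?thesis using s z by (intro bexI[of _ s]) (auto simp: algebra_simps)
    qed
  qed
  have piece: "\<bar>\<Phi> q - \<Phi> p\<bar> \<le> \<eta> * integral {p..q} (\<lambda>t. \<bar>w t\<bar>)"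
    if pq: "a \<le> p" "p \<le> q" "q \<le> b" and eta: "\<forall>s\<in>{p..q}. \<forall>r\<in>{p..q}. \<bar>g (u s) - g (u r)\<bar> \<le> \<eta>"
    for p q \<eta>
  proof -
    obtain s where s: "s \<in> {p..q}" "G (u q) - G (u p) = g (u s) * (u q - u p)"
      using mvt[OF pq] by blast
    have wpq: "w integrable_on {p..q}" by (rule integrable_on_subinterval[OF wi]) (use pq in auto)
    have hpq: "?h integrable_on {p..q}" by (rule integrable_on_subinterval[OF pi]) (use pq in auto)
    have awpq: "(\<lambda>t. \<bar>w t\<bar>) integrable_on {p..q}" by (rule integrable_on_subinterval[OF awi]) (use pq in auto)
    have "\<Phi> q - \<Phi> p = G (u q) - G (u p) - integral {p..q} ?h"
      using pcomb[OF pq] by (simp add: \<Phi>_def)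
    also have "\<dots> = g (u s) * integral {p..q} w - integral {p..q} ?h"
      using s udiff[OF pq] by simp
    also have "\<dots> = integral {p..q} (\<lambda>r. g (u s) * w r - ?h r)"
      using wpq hpq
      by (subst Henstock_Kurzweil_Integration.integral_diff) (auto simp: integrable_on_cmult_left[OF wpq, simplified])
    also have "\<dots> = integral {p..q} (\<lambda>r. (g (u s) - g (u r)) * w r)"
      by (simp add: algebra_simps)
    finally have eq: "\<Phi> q - \<Phi> p = integral {p..q} (\<lambda>r. (g (u s) - g (u r)) * w r)" .
    have "norm (integral {p..q} (\<lambda>r. (g (u s) - g (u r)) * w r)) \<le> integral {p..q} (\<lambda>r. \<eta> * \<bar>w r\<bar>)"
    proof (rule integral_norm_bound_integral)
      show "(\<lambda>r. (g (u s) - g (u r)) * w r) integrable_on {p..q}"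
        using eq[symmetric] integrable_diff[OF integrable_on_cmult_left[OF wpq, of "g (u s)"] hpq]
        by (simp add: algebra_simps)
      show "(\<lambda>r. \<eta> * \<bar>w r\<bar>) integrable_on {p..q}"
        using integrable_on_cmult_left[OF awpq, of \<eta>] by simp
      fix r assume r: "r \<in> {p..q}"
      have "\<bar>g (u s) - g (u r)\<bar> * \<bar>w r\<bar> \<le> \<eta> * \<bar>w r\<bar>"
        using eta s(1) r by (intro mult_right_mono) auto
      then show "norm ((g (u s) - g (u r)) * w r) \<le> \<eta> * \<bar>w r\<bar>"
        by (simp add: abs_mult)
    qed
    then show ?thesis using eq by simp
  qed
  have bound: "\<bar>\<Phi> b\<bar> \<le> \<eta> * I" if eta: "\<eta> > 0" for \<eta>
  proof (cases "a = b")
    case True then show ?thesis by (simp add: \<Phi>_def I_def)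
  next
    case False
    then have ab': "a < b" using ab by simp
    obtain d where d: "d > 0" "\<forall>x\<in>{a..b}. \<forall>x'\<in>{a..b}. dist x' x < d \<longrightarrow> dist (g (u x')) (g (u x)) < \<eta>"
      using ucont eta unfolding uniformly_continuous_on_def by metis
    obtain N :: nat where N: "(b - a) / d < real N" using reals_Archimedean2 by blast
    have "(b - a) / d > 0" using ab' d by simp
    then have Npos: "N > 0" using N by (metis of_nat_0_less_iff order_less_trans)
    define h where "h = (b - a) / N"
    have hpos: "h > 0" using ab' Npos by (simp add: h_def)
    have "b - a < real N * d" using N d by (simp add: pos_divide_less_eq)
    then have hd: "h < d" using Npos unfolding h_def by (simp add: pos_divide_less_eq mult.commute)
    have Nh: "a + real N * h = b" using Npos by (simp add: h_def)
    have step: "\<bar>\<Phi> (a + real i * h)\<bar> \<le> \<eta> * integral {a..a + real i * h} (\<lambda>t. \<bar>w t\<bar>)"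
      if "i \<le> N" for i
      using that
    proof (induction i)
      case 0 then show ?case by (simp add: \<Phi>_def)
    next
      case (Suc i)
      let ?p = "a + real i * h" and ?q = "a + real (Suc i) * h"
      have iN: "real i \<le> real N" "real (Suc i) \<le> real N" using Suc.prems by auto
      have pq: "a \<le> ?p" "?p \<le> ?q" "?q \<le> b"
      proof -
        show "a \<le> ?p" using hpos by simp
        show "?p \<le> ?q" using hpos by (simp add: algebra_simps)
        have "real (Suc i) * h \<le> real N * h" using iN hpos by (intro mult_right_mono) auto
        then show "?q \<le> b" using Nh by linarith
      qed
      have "\<forall>s\<in>{?p..?q}. \<forall>r\<in>{?p..?q}. \<bar>g (u s) - g (u r)\<bar> \<le> \<eta>"
      proof (intro ballI)
        fix s r assume sr: "s \<in> {?p..?q}" "r \<in> {?p..?q}"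
        have "?q - ?p = h" by (simp add: algebra_simps)
        moreover have "\<bar>s - r\<bar> \<le> ?q - ?p" using sr by (auto simp: abs_le_iff)
        ultimately have "dist s r < d" using hd by (simp add: dist_real_def)
        moreover have "s \<in> {a..b}" "r \<in> {a..b}" using sr pq by auto
        ultimately have "dist (g (u s)) (g (u r)) < \<eta>" using d(2) by blast
        then show "\<bar>g (u s) - g (u r)\<bar> \<le> \<eta>" by (simp add: dist_real_def)
      qed
      then have "\<bar>\<Phi> ?q - \<Phi> ?p\<bar> \<le> \<eta> * integral {?p..?q} (\<lambda>t. \<bar>w t\<bar>)"
        using piece[OF pq] by blast
      moreover have "\<bar>\<Phi> ?p\<bar> \<le> \<eta> * integral {a..?p} (\<lambda>t. \<bar>w t\<bar>)"
        using Suc by auto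
      moreover have "\<eta> * integral {a..?q} (\<lambda>t. \<bar>w t\<bar>) = \<eta> * integral {a..?p} (\<lambda>t. \<bar>w t\<bar>) + \<eta> * integral {?p..?q} (\<lambda>t. \<bar>w t\<bar>)"
        using acomb[OF pq] by (metis distrib_left)
      moreover have "\<bar>\<Phi> ?q\<bar> \<le> \<bar>\<Phi> ?q - \<Phi> ?p\<bar> + \<bar>\<Phi> ?p\<bar>"
        using abs_triangle_ineq[of "\<Phi> ?q - \<Phi> ?p" "\<Phi> ?p"] by simp
      ultimately show ?case by linarith
    qed
    show ?thesis using step[of N] Nh by (simp add: I_def)
  qed
  have I0: "I \<ge> 0" unfolding I_def using awi by (intro integral_nonneg) auto
  have "\<Phi> b = 0"
  proof (rule ccontr)
    assume ne: "\<Phi> b \<noteq> 0"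
    define \<eta> where "\<eta> = \<bar>\<Phi> b\<bar> / (2 * (I + 1))"
    have "\<eta> > 0" using ne I0 by (simp add: \<eta>_def)
    then have "\<bar>\<Phi> b\<bar> \<le> \<eta> * I" by (rule bound)
    moreover have "\<eta> * I < \<bar>\<Phi> b\<bar>"
    proof -
      have p: "\<bar>\<Phi> b\<bar> > 0" using ne by simp
      have "I / (2 * (I + 1)) < 1" using I0 by (simp add: field_simps)
      then have "\<bar>\<Phi> b\<bar> * (I / (2 * (I + 1))) < \<bar>\<Phi> b\<bar> * 1" using p by (rule mult_strict_left_mono)
      then show ?thesis by (simp add: \<eta>_def)
    qed
    ultimately show False by simp
  qed
  then show ?thesis by (simp add: \<Phi>_def)
qed


locale Vsetup = Fsetup +
  fixes v v' :: "real \<Rightarrow> real" and \<epsilon> A B :: real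
  assumes H1: "H1_on A B v v'" and eps: "\<epsilon> > 0" and AB: "A \<le> B"
begin

abbreviation e where "e \<equiv> energy_density F \<epsilon> v v'"
definition EI where "EI x y = integral {x..y} e"
abbreviation p where "p \<equiv> (\<lambda>t. f1 F (v t) * v' t)"

lemma si_v': "set_integrable lborel {A..B} v'"
  using H1 unfolding H1_on_def by blast
lemma si_v'2: "set_integrable lborel {A..B} (\<lambda>x. (v' x)\<^sup>2)"
  using H1 unfolding H1_on_def by blast

lemma rep_LB: "x \<in> {A..B} \<Longrightarrow> v x = v A + (LBINT t=A..x. v' t)"
  using H1 unfolding H1_on_def by blast

lemma rep: "x \<in> {A..B} \<Longrightarrow> v x = v A + integral {A..x} v'"
proof -
  assume x: "x \<in> {A..B}"
  have "set_integrable lborel {A..x} v'" by (rule set_integrable_subset[OF si_v']) (use x in auto)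
  then have "(LBINT t=A..x. v' t) = integral {A..x} v'" using x by (intro interval_integral_eq_integral) auto
  then show ?thesis using rep_LB[OF x] by simp
qed

lemma v'_int: "v' integrable_on {A..B}"
  using set_borel_integral_eq_integral(1)[OF si_v'] .
lemma av'_int: "(\<lambda>t. \<bar>v' t\<bar>) integrable_on {A..B}"
  using set_borel_integral_eq_integral(1)[OF set_integrable_abs[OF si_v']] .
lemma v'2_int: "(\<lambda>t. (v' t)\<^sup>2) integrable_on {A..B}"
  using set_borel_integral_eq_integral(1)[OF si_v'2] .

lemma vcont: "continuous_on {A..B} v"
proof -
  have "continuous_on {A..B} (\<lambda>t. v A + integral {A..t} v')"
    by (intro continuous_intros indefinite_integral_continuous_1[OF v'_int])
  then show ?thesis
  proof (rule continuous_on_eq)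
    fix x assume "x \<in> {A..B}"
    from rep[OF this] show "v A + integral {A..x} v' = v x" by simp
  qed
qed

lemma f1v_cont: "continuous_on {A..B} (\<lambda>t. f1 F (v t))"
  using continuous_on_compose2[OF f1_cont vcont] by auto
lemma Fv_cont: "continuous_on {A..B} (\<lambda>t. F (v t))"
  using continuous_on_compose2[OF Fcont vcont] by auto

lemma si_p: "set_integrable lborel {A..B} p"
proof -
  obtain M where M: "\<And>t. t \<in> {A..B} \<Longrightarrow> \<bar>f1 F (v t)\<bar> \<le> M"
    using compact_attains_sup[of "(\<lambda>t. \<bar>f1 F (v t)\<bar>) ` {A..B}"] 
    by (metis (no_types, lifting) compact_Icc compact_continuous_image continuous_on_rabs f1v_cont
        bounded_iff compact_imp_bounded image_eqI real_norm_def)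
  have m1: "(\<lambda>x. indicator {A..B} x *\<^sub>R v' x) \<in> borel_measurable lborel"
    using si_v' unfolding set_integrable_def by (rule borel_measurable_integrable)
  have m2: "(\<lambda>x. indicator {A..B} x *\<^sub>R f1 F (v x)) \<in> borel_measurable borel"
    by (rule borel_measurable_continuous_on_indicator[OF _ f1v_cont]) auto
  then have m2': "(\<lambda>x. indicator {A..B} x *\<^sub>R f1 F (v x)) \<in> borel_measurable lborel"
    by simp
  have "(\<lambda>x. (indicator {A..B} x *\<^sub>R f1 F (v x)) * (indicator {A..B} x *\<^sub>R v' x)) \<in> borel_measurable lborel"
    by (rule borel_measurable_times[OF m2' m1])
  moreover have "(\<lambda>x. (indicator {A..B} x *\<^sub>R f1 F (v x)) * (indicator {A..B} x *\<^sub>R v' x))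
      = (\<lambda>x. indicator {A..B} x *\<^sub>R p x)"
    by (auto simp: indicator_def fun_eq_iff)
  ultimately have meas: "set_borel_measurable lborel {A..B} p"
    unfolding set_borel_measurable_def by simp
  show ?thesis
  proof (rule set_integrable_bound[OF _ meas])
    show "set_integrable lborel {A..B} (\<lambda>x. M * v' x)" using si_v' by auto
    show "AE x in lborel. x \<in> {A..B} \<longrightarrow> norm (p x) \<le> norm (M * v' x)"
    proof (rule AE_I2, intro impI)
      fix x assume x: "x \<in> {A..B}"
      have "\<bar>f1 F (v x)\<bar> * \<bar>v' x\<bar> \<le> M * \<bar>v' x\<bar>" using M[OF x] by (intro mult_right_mono) auto
      moreover have "M \<ge> 0" using M[OF x] by linarith
      ultimately show "norm (p x) \<le> norm (M * v' x)" by (simp add: abs_mult)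
    qed
  qed
qed

lemma si_e: "set_integrable lborel {A..B} e"
proof -
  have "set_integrable lborel {A..B} (\<lambda>x. \<epsilon> / 2 * (v' x)\<^sup>2)" using si_v'2 by auto
  moreover have "set_integrable lborel {A..B} (\<lambda>x. F (v x) / \<epsilon>)"
    using eps by (intro borel_integrable_atLeastAtMost' continuous_intros Fv_cont) auto
  ultimately show ?thesis unfolding energy_density_def[abs_def] by (rule set_integral_add)
qed

lemma p_int: "p integrable_on {A..B}" using set_borel_integral_eq_integral(1)[OF si_p] .
lemma e_int: "e integrable_on {A..B}" using set_borel_integral_eq_integral(1)[OF si_e] .

lemma e_int_sub: "A \<le> x \<Longrightarrow> y \<le> B \<Longrightarrow> e integrable_on {x..y}"
  by (rule integrable_on_subinterval[OF e_int]) auto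
lemma p_int_sub: "A \<le> x \<Longrightarrow> y \<le> B \<Longrightarrow> p integrable_on {x..y}"
  by (rule integrable_on_subinterval[OF p_int]) auto

lemma e_ge_abs_p: "e t \<ge> \<bar>p t\<bar>"
proof -
  obtain r where r: "r > 0" "sqrt \<epsilon> = r" "\<epsilon> = r\<^sup>2" using eps by (intro that[of "sqrt \<epsilon>"]) auto
  have "0 \<le> 1/2 * (sqrt \<epsilon> * \<bar>v' t\<bar> - \<bar>f1 F (v t)\<bar> / sqrt \<epsilon>)\<^sup>2" by simp
  also have "\<dots> = e t - \<bar>p t\<bar>"
    using f1_sq[of "v t"] unfolding energy_density_def r(2) r(3)
    using r(1) by (simp add: power2_eq_square field_simps abs_mult)
  finally show ?thesis by simp
qed

lemma e_nonneg: "e t \<ge> 0" using e_ge_abs_p[of t] by linarith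

lemma L_eq: "1/2 * (sqrt \<epsilon> * v' t - f1 F (v t) / sqrt \<epsilon>)\<^sup>2 = e t - p t"
proof -
  obtain r where r: "r > 0" "sqrt \<epsilon> = r" "\<epsilon> = r\<^sup>2" using eps by (intro that[of "sqrt \<epsilon>"]) auto
  show ?thesis
    using f1_sq[of "v t"] unfolding energy_density_def r(2) r(3)
    using r(1) by (simp add: power2_eq_square field_simps)
qed

lemma EI_nonneg: "EI x y \<ge> 0"
  unfolding EI_def
proof (cases "e integrable_on {x..y}")
  case True then show "integral {x..y} e \<ge> 0" by (rule integral_nonneg) (use e_nonneg in auto)
next
  case False then show "integral {x..y} e \<ge> 0" by (simp add: not_integrable_integral)
qed

lemma EI_add: "A \<le> x \<Longrightarrow> x \<le> y \<Longrightarrow> y \<le> z \<Longrightarrow> z \<le> B \<Longrightarrow> EI x y + EI y z = EI x z"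
  unfolding EI_def
  by (rule Henstock_Kurzweil_Integration.integral_combine) (auto intro: e_int_sub)

lemma EI_F: "A \<le> x \<Longrightarrow> x \<le> y \<Longrightarrow> y \<le> B \<Longrightarrow> EI x y \<ge> integral {x..y} (\<lambda>t. F (v t) / \<epsilon>)"
  unfolding EI_def
proof (rule integral_le)
  assume xy: "A \<le> x" "x \<le> y" "y \<le> B"
  show "(\<lambda>t. F (v t) / \<epsilon>) integrable_on {x..y}"
    using eps by (intro integrable_continuous_interval continuous_intros continuous_on_subset[OF Fv_cont]) (use xy in auto)
  show "e integrable_on {x..y}" using xy by (intro e_int_sub) auto
  fix t show "F (v t) / \<epsilon> \<le> e t"
    using eps by (simp add: energy_density_def)
qed

lemma rep_sub: "A \<le> x \<Longrightarrow> x \<le> t \<Longrightarrow> t \<le> B \<Longrightarrow> v t = v x + integral {x..t} v'"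
proof -
  assume a: "A \<le> x" "x \<le> t" "t \<le> B"
  have i: "v' integrable_on {A..t}" by (rule integrable_on_subinterval[OF v'_int]) (use a in auto)
  have "integral {A..x} v' + integral {x..t} v' = integral {A..t} v'"
    by (rule Henstock_Kurzweil_Integration.integral_combine) (use a i in auto)
  moreover have "v x = v A + integral {A..x} v'" using a by (intro rep) auto
  moreover have "v t = v A + integral {A..t} v'" using a by (intro rep) auto
  ultimately show ?thesis by linarith
qed

lemma chain: "A \<le> x \<Longrightarrow> x \<le> y \<Longrightarrow> y \<le> B \<Longrightarrow> G (v y) - G (v x) = integral {x..y} p"
proof -
  assume a: "A \<le> x" "x \<le> y" "y \<le> B"
  show ?thesis
  proof (rule chain_rule_HK)
    show "x \<le> y" by fact
    show "v' integrable_on {x..y}" by (rule integrable_on_subinterval[OF v'_int]) (use a in auto)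
    show "(\<lambda>t. \<bar>v' t\<bar>) integrable_on {x..y}" by (rule integrable_on_subinterval[OF av'_int]) (use a in auto)
    show "p integrable_on {x..y}" using a by (intro p_int_sub) auto
    show "\<And>t. t \<in> {x..y} \<Longrightarrow> v t = v x + integral {x..t} v'" using a by (intro rep_sub) auto
    show "continuous_on UNIV (f1 F)" by (rule f1_cont)
    show "\<And>s. (G has_real_derivative f1 F s) (at s)" by (rule G_deriv)
  qed
qed


lemma calib: "A \<le> x \<Longrightarrow> x \<le> y \<Longrightarrow> y \<le> B \<Longrightarrow> \<bar>G (v y) - G (v x)\<bar> \<le> EI x y"
proof -
  assume a: "A \<le> x" "x \<le> y" "y \<le> B"
  have "norm (integral {x..y} p) \<le> integral {x..y} e"
  proof (rule integral_norm_bound_integral)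
    show "p integrable_on {x..y}" using a by (intro p_int_sub) auto
    show "e integrable_on {x..y}" using a by (intro e_int_sub) auto
    fix t show "norm (p t) \<le> e t" using e_ge_abs_p[of t] by simp
  qed
  then show ?thesis using chain[OF a] by (simp add: EI_def)
qed

lemma LB_e: "(LBINT t=A..B. e t) = EI A B"
  unfolding EI_def using AB si_e by (intro interval_integral_eq_integral) auto

lemma LB_L: "(LBINT t=A..B. 1/2 * (sqrt \<epsilon> * v' t - f1 F (v t) / sqrt \<epsilon>)\<^sup>2) = EI A B - (G (v B) - G (v A))"
proof -
  have sL: "set_integrable lborel {A..B} (\<lambda>t. e t - p t)" using si_e si_p by (rule set_integral_diff)
  have "(LBINT t=A..B. 1/2 * (sqrt \<epsilon> * v' t - f1 F (v t) / sqrt \<epsilon>)\<^sup>2) = (LBINT t=A..B. e t - p t)"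
    by (simp only: L_eq)
  also have "\<dots> = integral {A..B} (\<lambda>t. e t - p t)"
    using AB sL by (intro interval_integral_eq_integral) auto
  also have "\<dots> = integral {A..B} e - integral {A..B} p"
    by (rule Henstock_Kurzweil_Integration.integral_diff[OF e_int p_int])
  finally show ?thesis using chain[of A B] AB by (simp add: EI_def)
qed

end


context Vsetup begin

definition HR where "HR s = G 1 - G s"
definition HL where "HL s = G s - G (-1)"

lemma EI_mono_left: "A \<le> x \<Longrightarrow> x \<le> t \<Longrightarrow> t \<le> y \<Longrightarrow> y \<le> B \<Longrightarrow> EI t y \<le> EI x y"
  using EI_add[of x t y] EI_nonneg[of x t] by linarith
lemma EI_mono_right: "A \<le> x \<Longrightarrow> x \<le> t \<Longrightarrow> t \<le> y \<Longrightarrow> y \<le> B \<Longrightarrow> EI x t \<le> EI x y"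
  using EI_add[of x t y] EI_nonneg[of t y] by linarith

lemma EI_refl: "EI x x = 0" by (simp add: EI_def)

lemma integral_lower_const:
  fixes f :: "real \<Rightarrow> real" and x y c :: real
  assumes "x \<le> y" "f integrable_on {x..y}" "\<And>t. t \<in> {x..y} \<Longrightarrow> c \<le> f t"
  shows "(y - x) * c \<le> integral {x..y} f"
proof -
  have "integral {x..y} (\<lambda>t. c) \<le> integral {x..y} f"
    by (rule Henstock_Kurzweil_Integration.integral_le) (use assms in auto)
  then show ?thesis using assms(1) by simp
qed

lemma block_R:
  assumes x: "A \<le> x" and y: "y = x + kap * \<epsilon>" "y \<le> B" and rng: "\<And>t. t \<in> {x..y} \<Longrightarrow> 0 \<le> v t \<and> v t \<le> 2"
  shows "EI x y \<ge> HR (v y) / 2" "EI x y \<ge> HR (v x) - HR (v y)"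
proof -
  have xy: "x \<le> y" using y kap_pos eps by simp
  show "EI x y \<ge> HR (v x) - HR (v y)"
    using calib[OF x xy y(2)] by (simp add: HR_def)
  have cont: "continuous_on {x..y} (\<lambda>t. F (v t) / \<epsilon>)"
    using eps by (intro continuous_intros continuous_on_subset[OF Fv_cont]) (use x y in auto)
  have "EI x y \<ge> integral {x..y} (\<lambda>t. F (v t) / \<epsilon>)" using EI_F[OF x xy y(2)] .
  moreover have "(y - x) * ((HR (v y) - EI x y) / (kap * \<epsilon>)) \<le> integral {x..y} (\<lambda>t. F (v t) / \<epsilon>)"
  proof (rule integral_lower_const[OF xy])
    show "(\<lambda>t. F (v t) / \<epsilon>) integrable_on {x..y}" using cont by (rule integrable_continuous_interval)
    fix t assume t: "t \<in> {x..y}"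
    have "HR (v y) - HR (v t) \<le> EI t y"
      using calib[of t y] t x y by (auto simp: HR_def)
    also have "EI t y \<le> EI x y" using t x y by (intro EI_mono_left) auto
    finally have "HR (v y) - EI x y \<le> HR (v t)" by simp
    also have "HR (v t) \<le> kap * F (v t)" using H_le_F_pos rng[OF t] by (simp add: HR_def)
    finally have "(HR (v y) - EI x y) / (kap * \<epsilon>) \<le> kap * F (v t) / (kap * \<epsilon>)"
      using kap_pos eps by (intro divide_right_mono) auto
    then show "(HR (v y) - EI x y) / (kap * \<epsilon>) \<le> F (v t) / \<epsilon>"
      using kap_pos by simp
  qed
  moreover have "(y - x) * ((HR (v y) - EI x y) / (kap * \<epsilon>)) = HR (v y) - EI x y"
    using y kap_pos eps by simp
  ultimately show "EI x y \<ge> HR (v y) / 2" by linarith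
qed

lemma block_L:
  assumes x: "A \<le> x" and y: "y = x + kap * \<epsilon>" "y \<le> B" and rng: "\<And>t. t \<in> {x..y} \<Longrightarrow> -2 \<le> v t \<and> v t \<le> 0"
  shows "EI x y \<ge> HL (v x) / 2" "EI x y \<ge> HL (v y) - HL (v x)"
proof -
  have xy: "x \<le> y" using y kap_pos eps by simp
  show "EI x y \<ge> HL (v y) - HL (v x)"
    using calib[OF x xy y(2)] by (simp add: HL_def)
  have cont: "continuous_on {x..y} (\<lambda>t. F (v t) / \<epsilon>)"
    using eps by (intro continuous_intros continuous_on_subset[OF Fv_cont]) (use x y in auto)
  have "EI x y \<ge> integral {x..y} (\<lambda>t. F (v t) / \<epsilon>)" using EI_F[OF x xy y(2)] .
  moreover have "(y - x) * ((HL (v x) - EI x y) / (kap * \<epsilon>)) \<le> integral {x..y} (\<lambda>t. F (v t) / \<epsilon>)"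
  proof (rule integral_lower_const[OF xy])
    show "(\<lambda>t. F (v t) / \<epsilon>) integrable_on {x..y}" using cont by (rule integrable_continuous_interval)
    fix t assume t: "t \<in> {x..y}"
    have "HL (v x) - HL (v t) \<le> EI x t"
      using calib[of x t] t x y by (auto simp: HL_def)
    also have "EI x t \<le> EI x y" using t x y by (intro EI_mono_right) auto
    finally have "HL (v x) - EI x y \<le> HL (v t)" by simp
    also have "HL (v t) \<le> kap * F (v t)" using H_le_F_neg rng[OF t] by (simp add: HL_def)
    finally have "(HL (v x) - EI x y) / (kap * \<epsilon>) \<le> kap * F (v t) / (kap * \<epsilon>)"
      using kap_pos eps by (intro divide_right_mono) auto
    then show "(HL (v x) - EI x y) / (kap * \<epsilon>) \<le> F (v t) / \<epsilon>"
      using kap_pos by simp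
  qed
  moreover have "(y - x) * ((HL (v x) - EI x y) / (kap * \<epsilon>)) = HL (v x) - EI x y"
    using y kap_pos eps by simp
  ultimately show "EI x y \<ge> HL (v x) / 2" by linarith
qed

lemma multi_R:
  assumes b: "A \<le> b" and bN: "b + real N * (kap * \<epsilon>) \<le> B"
    and rng: "\<And>t. t \<in> {b..b + real N * (kap * \<epsilon>)} \<Longrightarrow> 0 \<le> v t \<and> v t \<le> 2"
  shows "EI b (b + real N * (kap * \<epsilon>)) \<ge> (1 - 5/4 * (2/3)^N) * HR (v b) + 1/4 * HR (v (b + real N * (kap * \<epsilon>)))"
proof -
  define h where "h = kap * \<epsilon>"
  have h0: "h > 0" using kap_pos eps by (simp add: h_def)
  define Hs where "Hs j = HR (v (b + real j * h))" for j :: nat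
  define Ep where "Ep j = (if j < N then EI (b + real j * h) (b + real (Suc j) * h)
      else max (Hs j - Hs (Suc j)) (Hs (Suc j) / 2))" for j :: nat
  have pos: "A \<le> b + real j * h" "b + real (Suc j) * h \<le> B" if "j < N" for j
  proof -
    have "real j * h \<ge> 0" using h0 by simp
    then show "A \<le> b + real j * h" using b by linarith
    have "real (Suc j) * h \<le> real N * h" using that h0 by (intro mult_right_mono) auto
    then show "b + real (Suc j) * h \<le> B" using bN by (simp add: h_def)
  qed
  have c: "Ep j \<ge> Hs j - Hs (Suc j) \<and> Ep j \<ge> Hs (Suc j) / 2" for j
  proof (cases "j < N")
    case True
    have r: "\<And>t. t \<in> {b + real j * h..b + real (Suc j) * h} \<Longrightarrow> 0 \<le> v t \<and> v t \<le> 2"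
    proof (rule rng)
      fix t assume t: "t \<in> {b + real j * h..b + real (Suc j) * h}"
      have "real (Suc j) * h \<le> real N * h" using True h0 by (intro mult_right_mono) auto
      moreover have "real j * h \<ge> 0" using h0 by simp
      ultimately show "t \<in> {b..b + real N * (kap * \<epsilon>)}" using t by (auto simp: h_def)
    qed
    have e: "b + real (Suc j) * h = b + real j * h + kap * \<epsilon>" by (simp add: h_def algebra_simps)
    show ?thesis using block_R[OF pos(1)[OF True] e pos(2)[OF True] r] True
      by (simp add: Ep_def Hs_def)
  next
    case False then show ?thesis by (simp add: Ep_def)
  qed
  have sumEq: "(\<Sum>j<n. Ep j) = EI b (b + real n * h)" if "n \<le> N" for n
    using that
  proof (induction n)
    case 0 then show ?case by (simp add: EI_refl)
  next
    case (Suc n)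
    then have nN: "n < N" by simp
    have "(\<Sum>j<Suc n. Ep j) = EI b (b + real n * h) + EI (b + real n * h) (b + real (Suc n) * h)"
      using Suc nN by (simp add: Ep_def)
    also have "\<dots> = EI b (b + real (Suc n) * h)"
      using pos[OF nN] h0 b by (intro EI_add) (auto simp: algebra_simps)
    finally show ?case .
  qed
  have "(\<Sum>j<N. Ep j) \<ge> (1 - 5/4 * (2/3)^N) * Hs 0 + 1/4 * Hs N"
    using c by (intro seq_lemma) auto
  then show ?thesis using sumEq[of N] by (simp add: Hs_def h_def)
qed

lemma multi_L:
  assumes a: "a \<le> B" and aN: "A \<le> a - real N * (kap * \<epsilon>)"
    and rng: "\<And>t. t \<in> {a - real N * (kap * \<epsilon>)..a} \<Longrightarrow> -2 \<le> v t \<and> v t \<le> 0"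
  shows "EI (a - real N * (kap * \<epsilon>)) a \<ge> (1 - 5/4 * (2/3)^N) * HL (v a) + 1/4 * HL (v (a - real N * (kap * \<epsilon>)))"
proof -
  define h where "h = kap * \<epsilon>"
  have h0: "h > 0" using kap_pos eps by (simp add: h_def)
  define Hs where "Hs j = HL (v (a - real j * h))" for j :: nat
  define Ep where "Ep j = (if j < N then EI (a - real (Suc j) * h) (a - real j * h)
      else max (Hs j - Hs (Suc j)) (Hs (Suc j) / 2))" for j :: nat
  have pos: "A \<le> a - real (Suc j) * h" "a - real j * h \<le> B" if "j < N" for j
  proof -
    have "real j * h \<ge> 0" using h0 by simp
    then show "a - real j * h \<le> B" using a by linarith
    have "real (Suc j) * h \<le> real N * h" using that h0 by (intro mult_right_mono) auto
    then show "A \<le> a - real (Suc j) * h" using aN by (simp add: h_def)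
  qed
  have c: "Ep j \<ge> Hs j - Hs (Suc j) \<and> Ep j \<ge> Hs (Suc j) / 2" for j
  proof (cases "j < N")
    case True
    have r: "\<And>t. t \<in> {a - real (Suc j) * h..a - real j * h} \<Longrightarrow> -2 \<le> v t \<and> v t \<le> 0"
    proof (rule rng)
      fix t assume t: "t \<in> {a - real (Suc j) * h..a - real j * h}"
      have "real (Suc j) * h \<le> real N * h" using True h0 by (intro mult_right_mono) auto
      moreover have "real j * h \<ge> 0" using h0 by simp
      ultimately show "t \<in> {a - real N * (kap * \<epsilon>)..a}" using t by (auto simp: h_def)
    qed
    have e: "a - real j * h = a - real (Suc j) * h + kap * \<epsilon>" by (simp add: h_def algebra_simps)
    show ?thesis using block_L[OF pos(1)[OF True] e pos(2)[OF True] r] True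
      by (simp add: Ep_def Hs_def)
  next
    case False then show ?thesis by (simp add: Ep_def)
  qed
  have sumEq: "(\<Sum>j<n. Ep j) = EI (a - real n * h) a" if "n \<le> N" for n
    using that
  proof (induction n)
    case 0 then show ?case by (simp add: EI_refl)
  next
    case (Suc n)
    then have nN: "n < N" by simp
    have "(\<Sum>j<Suc n. Ep j) = EI (a - real n * h) a + EI (a - real (Suc n) * h) (a - real n * h)"
      using Suc nN by (simp add: Ep_def)
    also have "\<dots> = EI (a - real (Suc n) * h) a"
      using pos[OF nN] h0 EI_add[of "a - real (Suc n) * h" "a - real n * h" a] a
      by (simp add: algebra_simps)
    finally show ?case .
  qed
  have "(\<Sum>j<N. Ep j) \<ge> (1 - 5/4 * (2/3)^N) * Hs 0 + 1/4 * Hs N"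
    using c by (intro seq_lemma) auto
  then show ?thesis using sumEq[of N] by (simp add: Hs_def h_def)
qed

end


lemma int_lower_const:
  fixes f :: "real \<Rightarrow> real" and x y c :: real
  assumes "x \<le> y" "f integrable_on {x..y}" "\<And>t. t \<in> {x..y} \<Longrightarrow> c \<le> f t"
  shows "(y - x) * c \<le> integral {x..y} f"
proof -
  have "integral {x..y} (\<lambda>t. c) \<le> integral {x..y} f"
    by (rule Henstock_Kurzweil_Integration.integral_le) (use assms in auto)
  then show ?thesis using assms(1) by simp
qed

lemma theta_bound:
  fixes X L :: real and N :: nat
  assumes "real N \<ge> X - 1"
  shows "(2/3::real)^N \<le> 3/2 * exp (- (ln (3/2) * X))"
proof -
  have l: "ln (3/2::real) > 0" by simp
  have "(2/3::real)^N = exp (ln (2/3)) ^ N" by simp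
  also have "\<dots> = exp (real N * ln (2/3))" by (rule exp_of_nat_mult[symmetric])
  also have "ln (2/3::real) = - ln (3/2)" by (simp add: ln_div)
  also have "real N * - ln (3/2) \<le> (X - 1) * - ln (3/2)"
    using assms l by (intro mult_right_mono_neg) auto
  then have "exp (real N * - ln (3/2::real)) \<le> exp ((X - 1) * - ln (3/2))" by simp
  also have "exp ((X - 1) * - ln (3/2::real)) = exp (ln (3/2)) * exp (- (ln (3/2) * X))"
  proof -
    have "(X - 1) * - ln (3/2::real) = ln (3/2) + - (ln (3/2) * X)" by (simp add: algebra_simps)
    then show ?thesis by (simp only: exp_add)
  qed
  also have "\<dots> = 3/2 * exp (- (ln (3/2) * X))" by simp
  finally show ?thesis .
qed

context Vsetup begin

lemma mid: "A \<le> a \<Longrightarrow> a \<le> b \<Longrightarrow> b \<le> B \<Longrightarrow> EI a b \<ge> c0 F - HR (v b) - HL (v a)"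
  using calib[of a b] c0_G by (simp add: HR_def HL_def)

lemma HR_nonneg: "0 \<le> s \<Longrightarrow> s \<le> 2 \<Longrightarrow> HR s \<ge> 0"
  using H_bounds_pos[of s] kL_pos by (simp add: HR_def) (smt (verit) mult_nonneg_nonneg zero_le_power2)
lemma HL_nonneg: "-2 \<le> s \<Longrightarrow> s \<le> 0 \<Longrightarrow> HL s \<ge> 0"
  using H_bounds_neg[of s] kL_pos by (simp add: HL_def) (smt (verit) mult_nonneg_nonneg zero_le_power2)

end

context Fsetup begin

definition dd where "dd = min 1 (min (kL / (8 * kU)) (1 / (4 * kU)))"
definition cc where "cc \<rho> = ln (3/2) * \<rho> / (4 * kap)"

lemma dd_facts: "0 < dd" "dd \<le> 1" "kU * dd \<le> kL / 8" "2 * kU * dd \<le> 1/2"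
proof -
  show "0 < dd" using kL_pos kU_pos by (simp add: dd_def)
  show "dd \<le> 1" by (simp add: dd_def)
  have "dd \<le> kL / (8 * kU)" by (simp add: dd_def)
  then have "kU * dd \<le> kU * (kL / (8 * kU))" using kU_pos by (intro mult_left_mono) auto
  then show "kU * dd \<le> kL / 8" using kU_pos by simp
  have "dd \<le> 1 / (4 * kU)" by (simp add: dd_def)
  then have "2 * kU * dd \<le> 2 * kU * (1 / (4 * kU))" using kU_pos by (intro mult_left_mono) auto
  then show "2 * kU * dd \<le> 1/2" using kU_pos by simp
qed

lemma find_point:
  fixes g :: "real \<Rightarrow> real" and x y m c :: real
  assumes xy: "x \<le> y" and gi: "g integrable_on {x..y}"
    and small: "integral {x..y} g \<le> c" and big: "(y - x) * m > c"
    and low: "\<And>t. t \<in> {x..y} \<Longrightarrow> \<not> P t \<Longrightarrow> g t \<ge> m"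
  shows "\<exists>t\<in>{x..y}. P t"
proof (rule ccontr)
  assume "\<not> (\<exists>t\<in>{x..y}. P t)"
  then have "(y - x) * m \<le> integral {x..y} g" using low by (intro int_lower_const[OF xy gi]) auto
  then show False using small big by linarith
qed

end


context Fsetup begin

lemma key:
  fixes \<rho> \<epsilon> :: real and v v' :: "real \<Rightarrow> real"
  assumes rho: "\<rho> > 0" and eps: "0 < \<epsilon>" "\<epsilon> \<le> 1" and H1: "H1_on (-\<rho>) \<rho> v v'"
    and wt: "(LBINT y=-\<rho>..\<rho>. \<bar>y\<bar> * (v y - sgn y)\<^sup>2) \<le> \<rho>\<^sup>2 * dd / 16"
  shows "(LBINT y=-\<rho>..\<rho>. energy_density F \<epsilon> v v' y) \<ge> c0 F - 10 * exp (- cc \<rho> / \<epsilon>) \<and>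
     ((LBINT y=-\<rho>..\<rho>. energy_density F \<epsilon> v v' y) - c0 F \<le> kL / 2 \<longrightarrow>
       (\<forall>\<rho>'. \<rho>' \<ge> \<rho> \<and> H1_on (-\<rho>') \<rho>' v v' \<longrightarrow>
          (LBINT y=-\<rho>'..\<rho>'. 1/2 * (sqrt \<epsilon> * v' y - f1 F (v y) / sqrt \<epsilon>)\<^sup>2)
            \<le> 10 * ((LBINT y=-\<rho>'..\<rho>'. energy_density F \<epsilon> v v' y) - c0 F) + 10 * exp (- cc \<rho> / \<epsilon>)))"
proof -
  interpret R: Vsetup F cF CF v v' \<epsilon> "-\<rho>" \<rho>
    by unfold_locales (use H1 eps rho in auto)
  note ddf = dd_facts
  define \<delta> where "\<delta> = sqrt dd"
  have \<delta>: "0 < \<delta>" "\<delta> \<le> 1" "\<delta>\<^sup>2 = dd" using ddf by (auto simp: \<delta>_def)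
  define g where "g y = \<bar>y\<bar> * (v y - sgn y)\<^sup>2" for y
  have g_si: "set_integrable lborel {-\<rho>..\<rho>} g"
  proof (rule set_integrable_bound)
    show "set_integrable lborel {-\<rho>..\<rho>} (\<lambda>y. \<bar>y\<bar> * (\<bar>v y\<bar> + 1)\<^sup>2)"
      by (intro borel_integrable_atLeastAtMost' continuous_intros R.vcont)
    have m: "(\<lambda>x. indicator {-\<rho>..\<rho>} x *\<^sub>R v x) \<in> borel_measurable borel"
      by (rule borel_measurable_continuous_on_indicator[OF _ R.vcont]) auto
    have "(\<lambda>x. indicator {-\<rho>..\<rho>} x *\<^sub>R (\<bar>x\<bar> * ((indicator {-\<rho>..\<rho>} x *\<^sub>R v x) - sgn x)\<^sup>2)) \<in> borel_measurable borel"
      using m by measurable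
    moreover have "(\<lambda>x. indicator {-\<rho>..\<rho>} x *\<^sub>R (\<bar>x\<bar> * ((indicator {-\<rho>..\<rho>} x *\<^sub>R v x) - sgn x)\<^sup>2))
       = (\<lambda>x. indicator {-\<rho>..\<rho>} x *\<^sub>R g x)"
      by (auto simp: fun_eq_iff indicator_def g_def)
    ultimately show "set_borel_measurable lborel {-\<rho>..\<rho>} g"
      unfolding set_borel_measurable_def by simp
    show "AE x in lborel. x \<in> {-\<rho>..\<rho>} \<longrightarrow> norm (g x) \<le> norm (\<bar>x\<bar> * (\<bar>v x\<bar> + 1)\<^sup>2)"
    proof (rule AE_I2, intro impI)
      fix x :: real
      have "\<bar>v x - sgn x\<bar> \<le> \<bar>v x\<bar> + 1"
        by (cases "x > 0"; cases "x < 0") auto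
      then have "(v x - sgn x)\<^sup>2 \<le> (\<bar>v x\<bar> + 1)\<^sup>2"
        using abs_le_square_iff[of "v x - sgn x" "\<bar>v x\<bar> + 1"] by simp
      then have "\<bar>x\<bar> * (v x - sgn x)\<^sup>2 \<le> \<bar>x\<bar> * (\<bar>v x\<bar> + 1)\<^sup>2" by (intro mult_left_mono) auto
      then show "norm (g x) \<le> norm (\<bar>x\<bar> * (\<bar>v x\<bar> + 1)\<^sup>2)" by (simp add: g_def)
    qed
  qed
  have g_int: "g integrable_on {-\<rho>..\<rho>}" using set_borel_integral_eq_integral(1)[OF g_si] .
  have wt': "integral {-\<rho>..\<rho>} g \<le> \<rho>\<^sup>2 * dd / 16"
  proof -
    have "(LBINT y=-\<rho>..\<rho>. g y) = integral {-\<rho>..\<rho>} g"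
      using rho g_si by (intro interval_integral_eq_integral) auto
    then show ?thesis using wt by (simp add: g_def)
  qed
  have g_nn: "g y \<ge> 0" for y by (simp add: g_def)
  have sub: "integral {x..y} g \<le> \<rho>\<^sup>2 * dd / 16" and subi: "g integrable_on {x..y}"
    if "-\<rho> \<le> x" "x \<le> y" "y \<le> \<rho>" for x y
  proof -
    show i: "g integrable_on {x..y}" by (rule integrable_on_subinterval[OF g_int]) (use that in auto)
    have "integral {x..y} g \<le> integral {-\<rho>..\<rho>} g"
      by (rule integral_subset_le) (use that i g_int g_nn in auto)
    then show "integral {x..y} g \<le> \<rho>\<^sup>2 * dd / 16" using wt' by linarith
  qed
  have big: "(3*\<rho>/4 - \<rho>/2) * (\<rho>/2 * dd) > \<rho>\<^sup>2 * dd / 16"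
    using rho ddf by (simp add: power2_eq_square field_simps)
  have "\<exists>b\<in>{\<rho>/2..3*\<rho>/4}. \<bar>v b - 1\<bar> \<le> \<delta>"
  proof (rule find_point[OF _ subi sub big])
    fix y assume y: "y \<in> {\<rho>/2..3*\<rho>/4}" and n: "\<not> \<bar>v y - 1\<bar> \<le> \<delta>"
    have "\<delta>\<^sup>2 \<le> (v y - 1)\<^sup>2" using n \<delta>(1) by (simp add: abs_le_square_iff[symmetric] less_imp_le abs_of_pos)
    then have d: "dd \<le> (v y - 1)\<^sup>2" using \<delta> by simp
    have "\<rho>/2 * dd \<le> y * (v y - 1)\<^sup>2" using y rho ddf d by (intro mult_mono) auto
    then show "\<rho>/2 * dd \<le> g y" using y rho by (simp add: g_def)
  qed (use rho in auto)
  then obtain b where b: "\<rho>/2 \<le> b" "b \<le> 3*\<rho>/4" "\<bar>v b - 1\<bar> \<le> \<delta>" by auto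
  have big2: "(-\<rho>/2 - -3*\<rho>/4) * (\<rho>/2 * dd) > \<rho>\<^sup>2 * dd / 16"
    using rho ddf by (simp add: power2_eq_square field_simps)
  have "\<exists>a\<in>{-3*\<rho>/4..-\<rho>/2}. \<bar>v a + 1\<bar> \<le> \<delta>"
  proof (rule find_point[OF _ subi sub big2])
    fix y assume y: "y \<in> {-3*\<rho>/4..-\<rho>/2}" and n: "\<not> \<bar>v y + 1\<bar> \<le> \<delta>"
    have "\<delta>\<^sup>2 \<le> (v y + 1)\<^sup>2" using n \<delta>(1) by (simp add: abs_le_square_iff[symmetric] less_imp_le abs_of_pos)
    then have d: "dd \<le> (v y + 1)\<^sup>2" using \<delta> by simp
    have "\<rho>/2 * dd \<le> (-y) * (v y + 1)\<^sup>2" using y rho ddf d by (intro mult_mono) auto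
    moreover have "y < 0" using y rho by auto
    ultimately show "\<rho>/2 * dd \<le> g y" by (simp add: g_def)
  qed (use rho in auto)
  then obtain a where a: "-3*\<rho>/4 \<le> a" "a \<le> -\<rho>/2" "\<bar>v a + 1\<bar> \<le> \<delta>" by auto
  define h where "h = kap * \<epsilon>"
  have h0: "h > 0" using kap_pos eps by (simp add: h_def)
  define N where "N = nat \<lfloor>\<rho> / (4 * h)\<rfloor>"
  have N1: "real N \<le> \<rho> / (4 * h)" using rho h0 by (simp add: N_def)
  have N2: "real N \<ge> \<rho> / (4 * h) - 1"
  proof -
    have x0: "\<rho> / (4 * h) \<ge> 0" using rho h0 by simp
    have "real N = of_int \<lfloor>\<rho> / (4 * h)\<rfloor>" using x0 by (simp add: N_def)
    moreover have "\<rho> / (4 * h) < of_int \<lfloor>\<rho> / (4 * h)\<rfloor> + 1" by linarith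
    ultimately show ?thesis by linarith
  qed
  have Nh: "real N * h \<le> \<rho> / 4" using N1 h0 by (simp add: field_simps)
  have Nh0: "real N * h \<ge> 0" using h0 by simp
  define T where "T = 5/4 * (2/3::real)^N"
  define ex where "ex = exp (- cc \<rho> / \<epsilon>)"
  have ex0: "ex > 0" by (simp add: ex_def)
  have T0: "T \<ge> 0" by (simp add: T_def)
  have Tex: "T \<le> 15/8 * ex"
  proof -
    have "(2/3::real)^N \<le> 3/2 * exp (- (ln (3/2) * (\<rho> / (4 * h))))" by (rule theta_bound[OF N2])
    also have "ln (3/2) * (\<rho> / (4 * h)) = cc \<rho> / \<epsilon>" by (simp add: cc_def h_def field_simps)
    finally show ?thesis by (simp add: T_def ex_def)
  qed
  define t where "t = b + real N * h"
  define s where "s = a - real N * h"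
  have pos: "-\<rho> \<le> s" "s \<le> a" "a \<le> b" "b \<le> t" "t \<le> \<rho>" "-\<rho> \<le> a" "b \<le> \<rho>"
    using a b Nh Nh0 rho by (auto simp: s_def t_def)
  have vb: "0 \<le> v b" "v b \<le> 2" using b(3) \<delta>(2) by auto
  have va: "-2 \<le> v a" "v a \<le> 0" using a(3) \<delta>(2) by auto
  have HB: "0 \<le> R.HR (v b)" "R.HR (v b) \<le> kU * dd"
  proof -
    show "0 \<le> R.HR (v b)" using R.HR_nonneg vb by auto
    have "(1 - v b)\<^sup>2 \<le> \<delta>\<^sup>2" using b(3) by (simp add: abs_le_square_iff[symmetric] abs_minus_commute)
    then have "kU * (1 - v b)\<^sup>2 \<le> kU * dd" using \<delta> kU_pos by (intro mult_left_mono) auto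
    then show "R.HR (v b) \<le> kU * dd" using H_bounds_pos[OF vb] by (simp add: R.HR_def)
  qed
  have HA: "0 \<le> R.HL (v a)" "R.HL (v a) \<le> kU * dd"
  proof -
    show "0 \<le> R.HL (v a)" using R.HL_nonneg va by auto
    have "(1 + v a)\<^sup>2 \<le> \<delta>\<^sup>2" using a(3) by (simp add: abs_le_square_iff[symmetric] add.commute)
    then have "kU * (1 + v a)\<^sup>2 \<le> kU * dd" using \<delta> kU_pos by (intro mult_left_mono) auto
    then show "R.HL (v a) \<le> kU * dd" using H_bounds_neg[OF va] by (simp add: R.HL_def)
  qed
  have mid: "R.EI a b \<ge> c0 F - R.HR (v b) - R.HL (v a)" using pos by (intro R.mid) auto
  have LBe: "(LBINT y=-\<rho>..\<rho>. energy_density F \<epsilon> v v' y) = R.EI (-\<rho>) \<rho>"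
    using R.LB_e by simp
  have EIn: "R.EI x y \<ge> 0" for x y by (rule R.EI_nonneg)
  show ?thesis
  proof (cases "(\<forall>x\<in>{b..t}. 0 \<le> v x \<and> v x \<le> 2) \<and> (\<forall>x\<in>{s..a}. -2 \<le> v x \<and> v x \<le> 0)")
    case False
    have bigE: "R.EI (-\<rho>) \<rho> \<ge> c0 F + 5 * kL / 8"
    proof (cases "\<forall>x\<in>{b..t}. 0 \<le> v x \<and> v x \<le> 2")
      case False
      then obtain x0 where x0: "x0 \<in> {b..t}" "\<not> (0 \<le> v x0 \<and> v x0 \<le> 2)" by auto
      have vc: "continuous_on {b..x0} v" by (rule continuous_on_subset[OF R.vcont]) (use x0 pos in auto)
      obtain t' where t': "b \<le> t'" "t' \<le> x0" "v t' = 0 \<or> v t' = 2"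
      proof (cases "v x0 < 0")
        case True
        then obtain y where "b \<le> y" "y \<le> x0" "v y = 0" using IVT2'[of v x0 0 b, OF _ _ _ vc] vb x0 by auto
        then show ?thesis using that by blast
      next
        case False
        then have "v x0 > 2" using x0 by auto
        then obtain y where "b \<le> y" "y \<le> x0" "v y = 2" using IVT'[of v b 2 x0, OF _ _ _ vc] vb x0 by auto
        then show ?thesis using that by blast
      qed
      have Ht': "R.HR (v t') \<ge> kL" using t'(3) H_bounds_pos[of "v t'"] by (auto simp: R.HR_def)
      have "\<bar>G (v t') - G (v b)\<bar> \<le> R.EI b t'" using t' x0 pos by (intro R.calib) auto
      then have c1: "R.EI b t' \<ge> R.HR (v t') - R.HR (v b)" by (simp add: R.HR_def)
      have "R.EI (-\<rho>) \<rho> = R.EI (-\<rho>) a + R.EI a b + R.EI b t' + R.EI t' \<rho>"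
        using R.EI_add[of "-\<rho>" a b] R.EI_add[of a b t'] R.EI_add[of "-\<rho>" b t'] R.EI_add[of "-\<rho>" t' \<rho>]
          R.EI_add[of "-\<rho>" a t'] t' x0 pos by auto
      then show ?thesis using EIn[of "-\<rho>" a] EIn[of t' \<rho>] mid c1 Ht' HB HA ddf by linarith
    next
      case True
      with False have "\<not> (\<forall>x\<in>{s..a}. -2 \<le> v x \<and> v x \<le> 0)" by blast
      then obtain x0 where x0: "x0 \<in> {s..a}" "\<not> (-2 \<le> v x0 \<and> v x0 \<le> 0)" by auto
      have vc: "continuous_on {x0..a} v" by (rule continuous_on_subset[OF R.vcont]) (use x0 pos in auto)
      obtain t' where t': "x0 \<le> t'" "t' \<le> a" "v t' = 0 \<or> v t' = -2"
      proof (cases "v x0 > 0")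
        case True
        then obtain y where "x0 \<le> y" "y \<le> a" "v y = 0" using IVT2'[of v a 0 x0, OF _ _ _ vc] va x0 by auto
        then show ?thesis using that by blast
      next
        case False
        then have "v x0 < -2" using x0 by auto
        then obtain y where "x0 \<le> y" "y \<le> a" "v y = -2" using IVT'[of v x0 "-2" a, OF _ _ _ vc] va x0 by auto
        then show ?thesis using that by blast
      qed
      have Ht': "R.HL (v t') \<ge> kL" using t'(3) H_bounds_neg[of "v t'"] by (auto simp: R.HL_def)
      have "\<bar>G (v a) - G (v t')\<bar> \<le> R.EI t' a" using t' x0 pos by (intro R.calib) auto
      then have c1: "R.EI t' a \<ge> R.HL (v t') - R.HL (v a)" by (simp add: R.HL_def)
      have "R.EI (-\<rho>) \<rho> = R.EI (-\<rho>) t' + R.EI t' a + R.EI a b + R.EI b \<rho>"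
        using R.EI_add[of "-\<rho>" t' a] R.EI_add[of "-\<rho>" a b] R.EI_add[of "-\<rho>" b \<rho>] t' x0 pos by auto
      then show ?thesis using EIn[of "-\<rho>" t'] EIn[of b \<rho>] mid c1 Ht' HB HA ddf by linarith
    qed
    have nb: "\<not> ((LBINT y=-\<rho>..\<rho>. energy_density F \<epsilon> v v' y) - c0 F \<le> kL / 2)"
      using bigE LBe kL_pos by linarith
    show ?thesis
    proof (intro conjI)
      show "c0 F - 10 * exp (- cc \<rho> / \<epsilon>) \<le> (LBINT y=-\<rho>..\<rho>. energy_density F \<epsilon> v v' y)"
        using bigE LBe kL_pos ex0 unfolding ex_def by linarith
    qed (use nb in blast)
  next
    case True
    then have gR: "\<And>x. x \<in> {b..t} \<Longrightarrow> 0 \<le> v x \<and> v x \<le> 2"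
      and gL: "\<And>x. x \<in> {s..a} \<Longrightarrow> -2 \<le> v x \<and> v x \<le> 0" by auto
    have mR: "R.EI b t \<ge> (1 - T) * R.HR (v b) + 1/4 * R.HR (v t)"
      using R.multi_R[of b N] pos gR by (auto simp: t_def h_def T_def)
    have mL: "R.EI s a \<ge> (1 - T) * R.HL (v a) + 1/4 * R.HL (v s)"
      using R.multi_L[of a N] pos gL by (auto simp: s_def h_def T_def)
    have Ht: "R.HR (v t) \<ge> 0" using gR[of t] pos R.HR_nonneg by auto
    have Hs: "R.HL (v s) \<ge> 0" using gL[of s] pos R.HL_nonneg by auto
    have TQ: "T * R.HR (v b) + T * R.HL (v a) \<le> 15/16 * ex"
    proof -
      have "T * (R.HR (v b) + R.HL (v a)) \<le> T * (2 * kU * dd)" using HA HB T0 by (intro mult_left_mono) auto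
      also have "\<dots> \<le> (15/8 * ex) * (1/2)" using Tex T0 ddf ex0 kU_pos by (intro mult_mono) auto
      finally show ?thesis by (simp add: algebra_simps)
    qed
    have e1: "(1 - T) * R.HR (v b) = R.HR (v b) - T * R.HR (v b)" by (simp add: algebra_simps)
    have e2: "(1 - T) * R.HL (v a) = R.HL (v a) - T * R.HL (v a)" by (simp add: algebra_simps)
    have splitR: "R.EI (-\<rho>) \<rho> = R.EI (-\<rho>) s + R.EI s a + R.EI a b + R.EI b t + R.EI t \<rho>"
      using R.EI_add[of "-\<rho>" s a] R.EI_add[of "-\<rho>" a b] R.EI_add[of "-\<rho>" b t] R.EI_add[of "-\<rho>" t \<rho>] pos by auto
    have part1: "R.EI (-\<rho>) \<rho> \<ge> c0 F - (T * R.HR (v b) + T * R.HL (v a))"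
      using splitR EIn[of "-\<rho>" s] EIn[of t \<rho>] mid mR mL Ht Hs e1 e2 by linarith
    show ?thesis
    proof
      show "c0 F - 10 * exp (- cc \<rho> / \<epsilon>) \<le> (LBINT y=-\<rho>..\<rho>. energy_density F \<epsilon> v v' y)"
        using part1 TQ LBe ex0 unfolding ex_def[symmetric] by linarith
      show "(LBINT y=-\<rho>..\<rho>. energy_density F \<epsilon> v v' y) - c0 F \<le> kL / 2 \<longrightarrow>
       (\<forall>\<rho>'. \<rho>' \<ge> \<rho> \<and> H1_on (-\<rho>') \<rho>' v v' \<longrightarrow>
          (LBINT y=-\<rho>'..\<rho>'. 1/2 * (sqrt \<epsilon> * v' y - f1 F (v y) / sqrt \<epsilon>)\<^sup>2)
            \<le> 10 * ((LBINT y=-\<rho>'..\<rho>'. energy_density F \<epsilon> v v' y) - c0 F) + 10 * exp (- cc \<rho> / \<epsilon>))"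
      proof (intro impI allI)
        fix \<rho>' assume r': "\<rho> \<le> \<rho>' \<and> H1_on (-\<rho>') \<rho>' v v'"
        interpret R': Vsetup F cF CF v v' \<epsilon> "-\<rho>'" \<rho>'
          by unfold_locales (use r' eps rho in auto)
        have same: "R'.EI x y = R.EI x y" for x y by (simp add: R'.EI_def R.EI_def)
        have pos': "-\<rho>' \<le> -\<rho>" "\<rho> \<le> \<rho>'" using r' by auto
        have LBe': "(LBINT y=-\<rho>'..\<rho>'. energy_density F \<epsilon> v v' y) = R.EI (-\<rho>') \<rho>'"
          using R'.LB_e by simp
        have LBL': "(LBINT y=-\<rho>'..\<rho>'. 1/2 * (sqrt \<epsilon> * v' y - f1 F (v y) / sqrt \<epsilon>)\<^sup>2)
            = R.EI (-\<rho>') \<rho>' - (G (v \<rho>') - G (v (-\<rho>')))"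
          using R'.LB_L by simp
        have split': "R.EI (-\<rho>') \<rho>' = R.EI (-\<rho>') s + R.EI s a + R.EI a b + R.EI b t + R.EI t \<rho>'"
        proof -
          have i1: "R.EI (-\<rho>') s + R.EI s a = R.EI (-\<rho>') a"
            by (rule R'.EI_add) (use pos pos' in linarith)+
          have i2: "R.EI (-\<rho>') a + R.EI a b = R.EI (-\<rho>') b"
            by (rule R'.EI_add) (use pos pos' in linarith)+
          have i3: "R.EI (-\<rho>') b + R.EI b t = R.EI (-\<rho>') t"
            by (rule R'.EI_add) (use pos pos' in linarith)+
          have i4: "R.EI (-\<rho>') t + R.EI t \<rho>' = R.EI (-\<rho>') \<rho>'"
            by (rule R'.EI_add) (use pos pos' in linarith)+
          show ?thesis using i1 i2 i3 i4 by linarith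
        qed
        have cR: "\<bar>G (v \<rho>') - G (v t)\<bar> \<le> R.EI t \<rho>'"
          by (rule R'.calib) (use pos pos' in linarith)+
        have cL: "\<bar>G (v s) - G (v (-\<rho>'))\<bar> \<le> R.EI (-\<rho>') s"
          by (rule R'.calib) (use pos pos' in linarith)+
        have c0e: "c0 F = G 1 - G (-1)" by (rule c0_G)
        have "R.EI (-\<rho>') \<rho>' - (G (v \<rho>') - G (v (-\<rho>')))
            \<le> 10 * (R.EI (-\<rho>') \<rho>' - c0 F) + 10 * ex"
        proof -
          have cR': "G (v t) - G (v \<rho>') \<le> R.EI t \<rho>'" using cR by (simp add: abs_le_iff)
          have cL': "G (v (-\<rho>')) - G (v s) \<le> R.EI (-\<rho>') s" using cL by (simp add: abs_le_iff)
          have h1: "R.HR (v t) = G 1 - G (v t)" by (simp add: R.HR_def)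
          have h2: "R.HL (v s) = G (v s) - G (-1)" by (simp add: R.HL_def)
          define Hb where "Hb = R.HR (v b)"
          define Ha where "Ha = R.HL (v a)"
          define TB where "TB = T * Hb"
          define TA where "TA = T * Ha"
          have mR': "Hb - TB + 1/4 * R.HR (v t) \<le> R.EI b t" using mR e1 by (simp add: Hb_def TB_def)
          have mL': "Ha - TA + 1/4 * R.HL (v s) \<le> R.EI s a" using mL e2 by (simp add: Ha_def TA_def)
          have mid': "c0 F - Hb - Ha \<le> R.EI a b" using mid by (simp add: Hb_def Ha_def)
          have TQ': "TB + TA \<le> 15/16 * ex" using TQ by (simp add: TB_def TA_def Hb_def Ha_def)
          have D: "R.EI (-\<rho>') \<rho>' - c0 F \<ge> R.EI (-\<rho>') s + R.EI s a + R.EI b t + R.EI t \<rho>' - Hb - Ha"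
            using split' mid' by linarith
          have D2: "R.EI (-\<rho>') \<rho>' - c0 F \<ge> - (TB + TA)"
            using D mR' mL' Ht Hs EIn[of "-\<rho>'" s] EIn[of t \<rho>'] by linarith
          have L1: "R.EI (-\<rho>') \<rho>' - (G (v \<rho>') - G (v (-\<rho>'))) \<le>
              R.EI (-\<rho>') \<rho>' - c0 F + R.HR (v t) + R.HL (v s) + R.EI t \<rho>' + R.EI (-\<rho>') s"
            using cR' cL' c0e h1 h2 by linarith
          have L2a: "R.HR (v t) \<le> 4*R.EI b t - 4*Hb + 4*TB" using mR' by linarith
          have L2b: "R.HL (v s) \<le> 4*R.EI s a - 4*Ha + 4*TA" using mL' by linarith
          have L2: "R.HR (v t) + R.HL (v s) \<le> 4 * R.EI b t + 4 * R.EI s a - 4 * Hb - 4 * Ha + 4 * TB + 4 * TA"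
            using L2a L2b by linarith
          have L3: "R.EI (-\<rho>') \<rho>' - (G (v \<rho>') - G (v (-\<rho>'))) \<le> 5 * R.EI (-\<rho>') \<rho>' - 5 * c0 F + 4 * TB + 4 * TA"
            using L1 L2 D EIn[of "-\<rho>'" s] EIn[of t \<rho>'] by linarith
          have dist: "10 * (R.EI (-\<rho>') \<rho>' - c0 F) = 10 * R.EI (-\<rho>') \<rho>' - 10 * c0 F" by (simp add: algebra_simps)
          show ?thesis using L3 D2 TQ' ex0 dist by linarith
        qed
        then show "(LBINT y=-\<rho>'..\<rho>'. 1/2 * (sqrt \<epsilon> * v' y - f1 F (v y) / sqrt \<epsilon>)\<^sup>2)
            \<le> 10 * ((LBINT y=-\<rho>'..\<rho>'. energy_density F \<epsilon> v v' y) - c0 F) + 10 * exp (- cc \<rho> / \<epsilon>)"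
          using LBe' LBL' by (simp add: ex_def)
      qed
    qed
  qed
qed

end


theorem lemma5p3:
  fixes F :: "real \<Rightarrow> real" and \<rho> :: real
  assumes smooth: "smooth_fun F"
    and Fpos: "\<And>x. \<bar>x\<bar> \<noteq> 1 \<Longrightarrow> F x > 0"
    and Fquad: "\<exists>cF CF. cF > 0 \<and> CF > 0 \<and>
        (\<forall>x. \<bar>x\<bar> \<le> 2 \<longrightarrow> cF * (1 - \<bar>x\<bar>)\<^sup>2 \<le> F x \<and> F x \<le> CF * (1 - \<bar>x\<bar>)\<^sup>2)"
    and rho: "\<rho> > 0"
  shows "\<exists>c6 c7 C c. c6 > 0 \<and> c7 > 0 \<and> C > 0 \<and> c > 0 \<and>
    (\<forall>\<epsilon> v v'. 0 < \<epsilon> \<and> \<epsilon> \<le> 1 \<and> H1_on (-\<rho>) \<rho> v v' \<and>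
       (LBINT y=-\<rho>..\<rho>. \<bar>y\<bar> * (v y - sgn y)\<^sup>2) \<le> c6 \<longrightarrow>
       (LBINT y=-\<rho>..\<rho>. energy_density F \<epsilon> v v' y) \<ge> c0 F - C * exp (- c / \<epsilon>) \<and>
       ((LBINT y=-\<rho>..\<rho>. energy_density F \<epsilon> v v' y) - c0 F \<le> c7 \<longrightarrow>
         (\<forall>\<rho>'. \<rho>' \<ge> \<rho> \<and> H1_on (-\<rho>') \<rho>' v v' \<longrightarrow>
            (LBINT y=-\<rho>'..\<rho>'. 1/2 * (sqrt \<epsilon> * v' y - f1 F (v y) / sqrt \<epsilon>)\<^sup>2)
              \<le> C * ((LBINT y=-\<rho>'..\<rho>'. energy_density F \<epsilon> v v' y) - c0 F)
                 + C * exp (- c / \<epsilon>))))"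
proof -
  obtain cF CF where cq: "cF > 0" "CF > 0"
    "\<And>x. \<bar>x\<bar> \<le> 2 \<Longrightarrow> cF * (1 - \<bar>x\<bar>)\<^sup>2 \<le> F x \<and> F x \<le> CF * (1 - \<bar>x\<bar>)\<^sup>2"
    using Fquad by blast
  have "F differentiable (at x)" for x
    using smooth unfolding smooth_fun_def by (metis funpow_0)
  then have Fc: "continuous_on UNIV F"
    by (meson continuous_at_imp_continuous_on differentiable_imp_continuous_within)
  interpret Fsetup F cF CF
    by unfold_locales (use Fc Fpos cq in auto)
  have ccpos: "cc \<rho> > 0" using rho kap_pos by (simp add: cc_def)
  have body: "\<forall>\<epsilon> v v'. 0 < \<epsilon> \<and> \<epsilon> \<le> 1 \<and> H1_on (-\<rho>) \<rho> v v' \<and>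
       (LBINT y=-\<rho>..\<rho>. \<bar>y\<bar> * (v y - sgn y)\<^sup>2) \<le> \<rho>\<^sup>2 * dd / 16 \<longrightarrow>
       (LBINT y=-\<rho>..\<rho>. energy_density F \<epsilon> v v' y) \<ge> c0 F - 10 * exp (- cc \<rho> / \<epsilon>) \<and>
       ((LBINT y=-\<rho>..\<rho>. energy_density F \<epsilon> v v' y) - c0 F \<le> kL / 2 \<longrightarrow>
         (\<forall>\<rho>'. \<rho>' \<ge> \<rho> \<and> H1_on (-\<rho>') \<rho>' v v' \<longrightarrow>
            (LBINT y=-\<rho>'..\<rho>'. 1/2 * (sqrt \<epsilon> * v' y - f1 F (v y) / sqrt \<epsilon>)\<^sup>2)
              \<le> 10 * ((LBINT y=-\<rho>'..\<rho>'. energy_density F \<epsilon> v v' y) - c0 F)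
                 + 10 * exp (- cc \<rho> / \<epsilon>)))"
  proof (intro allI impI)
    fix \<epsilon> :: real and v v' :: "real \<Rightarrow> real"
    assume h: "0 < \<epsilon> \<and> \<epsilon> \<le> 1 \<and> H1_on (-\<rho>) \<rho> v v' \<and>
       (LBINT y=-\<rho>..\<rho>. \<bar>y\<bar> * (v y - sgn y)\<^sup>2) \<le> \<rho>\<^sup>2 * dd / 16"
    show "(LBINT y=-\<rho>..\<rho>. energy_density F \<epsilon> v v' y) \<ge> c0 F - 10 * exp (- cc \<rho> / \<epsilon>) \<and>
       ((LBINT y=-\<rho>..\<rho>. energy_density F \<epsilon> v v' y) - c0 F \<le> kL / 2 \<longrightarrow>
         (\<forall>\<rho>'. \<rho>' \<ge> \<rho> \<and> H1_on (-\<rho>') \<rho>' v v' \<longrightarrow>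
            (LBINT y=-\<rho>'..\<rho>'. 1/2 * (sqrt \<epsilon> * v' y - f1 F (v y) / sqrt \<epsilon>)\<^sup>2)
              \<le> 10 * ((LBINT y=-\<rho>'..\<rho>'. energy_density F \<epsilon> v v' y) - c0 F)
                 + 10 * exp (- cc \<rho> / \<epsilon>)))"
      using key[OF rho, of \<epsilon> v v'] h by blast
  qed
  have p1: "\<rho>\<^sup>2 * dd / 16 > 0" using rho dd_facts by simp
  have p2: "kL / 2 > 0" using kL_pos by simp
  show ?thesis
    by (rule exI[of _ "\<rho>\<^sup>2 * dd / 16"], rule exI[of _ "kL / 2"], rule exI[of _ 10], rule exI[of _ "cc \<rho>"])
       (use p1 p2 ccpos body in simp)
qed


end
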